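(* Let $f_1,f_2,\dots$ be real-valued measurable functions on a probability space $(\Omega,\mathcal F,\mathbb P)$ with tail $\sigma$-algebra $\mathcal T=\bigcap_n\sigma(f_n,f_{n+1},\dots)$. Suppose there are a subsequence $(f_{k_n})_n$ and real-valued $\mathcal T$-measurable $D_1,D_2,\dots$ such that, along $(f_{k_n})_n$ and along every further subsequence $(f_{m_n})_n$ of it, $\frac1N\sum_{n=1}^Nf_{m_n}-D_N\to0$ in $\mathbb P$-probability as $N\to\infty$. Then, passing to a further subsequence, $(f_{k_n})_n$ may be assumed bounded in probability, i.e. $\lim_{M\to\infty}\sup_n\mathbb P(|f_{k_n}|>M)=0$. *)

theory Defs
  imports "HOL-Probability.Probability"
begin

definition tail_sigma :: "'a measure \<Rightarrow> (nat \<Rightarrow> 'a \<Rightarrow> real) \<Rightarrow> 'a set set" where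
  "tail_sigma M f = (\<Inter>n. sigma_sets (space M)
      (\<Union>i\<in>{n..}. {f i -` B \<inter> space M | B. B \<in> sets borel}))"

definition tendsto_zero_in_prob :: "'a measure \<Rightarrow> (nat \<Rightarrow> 'a \<Rightarrow> real) \<Rightarrow> bool" where
  "tendsto_zero_in_prob M X \<longleftrightarrow>
     (\<forall>e>0. (\<lambda>N. measure M {\<omega> \<in> space M. e < \<bar>X N \<omega>\<bar>}) \<longlonglongrightarrow> 0)"

end

theory Submission
  imports Defs
begin

lemma tail_single:
  assumes "prob_space M" and h: "h \<in> borel_measurable M"
  shows "((\<lambda>C::real. measure M {\<omega> \<in> space M. C < \<bar>h \<omega>\<bar>}) \<longlongrightarrow> 0) at_top"
proof -
  interpret prob_space M by fact
  let ?mu = "distr M borel (\<lambda>\<omega>. \<bar>h \<omega>\<bar>)"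
  have hm: "(\<lambda>\<omega>. \<bar>h \<omega>\<bar>) \<in> borel_measurable M" using h by measurable
  interpret mu: real_distribution ?mu using hm by simp
  have eq: "measure M {\<omega> \<in> space M. C < \<bar>h \<omega>\<bar>} = 1 - cdf ?mu C" for C
  proof -
    have "cdf ?mu C = measure M ((\<lambda>\<omega>. \<bar>h \<omega>\<bar>) -` {..C} \<inter> space M)"
      unfolding cdf_def using hm by (simp add: measure_distr)
    also have "... = measure M {\<omega> \<in> space M. \<bar>h \<omega>\<bar> \<le> C}"
      by (rule arg_cong[where f="measure M"]) auto
    finally have 1: "cdf ?mu C = measure M {\<omega> \<in> space M. \<bar>h \<omega>\<bar> \<le> C}" .
    have "{\<omega> \<in> space M. C < \<bar>h \<omega>\<bar>} = space M - {\<omega> \<in> space M. \<bar>h \<omega>\<bar> \<le> C}" by auto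
    moreover have "{\<omega> \<in> space M. \<bar>h \<omega>\<bar> \<le> C} \<in> events" using hm by measurable
    ultimately show ?thesis using 1 prob_compl by simp
  qed
  have "((\<lambda>C. 1 - cdf ?mu C) \<longlongrightarrow> 1 - 1) at_top"
    by (intro tendsto_diff tendsto_const mu.cdf_lim_at_top_prob)
  then show ?thesis unfolding eq by simp
qed

lemma choose_seq:
  assumes "\<And>j m. \<exists>n>m. Q j n"
  shows "\<exists>s::nat\<Rightarrow>nat. strict_mono s \<and> (\<forall>j. Q j (s j))"
proof -
  define s where "s = rec_nat (SOME n. n > 0 \<and> Q 0 n) (\<lambda>j sj. SOME n. n > sj \<and> Q (Suc j) n)"
  have s0: "s 0 > 0 \<and> Q 0 (s 0)" unfolding s_def using someI_ex[OF assms[of 0 0]] by simp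
  have sS: "s (Suc j) > s j \<and> Q (Suc j) (s (Suc j))" for j
  proof -
    have e: "s (Suc j) = (SOME n. n > s j \<and> Q (Suc j) n)" by (simp add: s_def)
    have "\<exists>n. n > s j \<and> Q (Suc j) n" using assms by blast
    from someI_ex[OF this] show ?thesis unfolding e .
  qed
  have "strict_mono s" using sS by (simp add: strict_mono_Suc_iff)
  moreover have "Q j (s j)" for j using s0 sS by (cases j) auto
  ultimately show ?thesis by blast
qed

lemma arith_aux:
  fixes X Y u v d n :: real
  assumes n: "n > 0" and e: "X - Y = u - v"
    and a2: "\<not> 1/2 < \<bar>X / n - d\<bar>" and a1: "\<not> 1/2 < \<bar>Y / n - d\<bar>"
    and a3: "\<not> n < \<bar>v\<bar>" and big: "2 * n < \<bar>u\<bar>"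
  shows False
proof -
  from a2 have "\<bar>X / n - d\<bar> \<le> 1/2" by (simp only: not_less)
  from abs_le_D1[OF this] abs_le_D2[OF this] have b2: "X / n - d \<le> 1/2" "-(1/2) \<le> X / n - d" by linarith+
  from a1 have "\<bar>Y / n - d\<bar> \<le> 1/2" by (simp only: not_less)
  from abs_le_D1[OF this] abs_le_D2[OF this] have b1: "Y / n - d \<le> 1/2" "-(1/2) \<le> Y / n - d" by linarith+
  have "X / n - Y / n = (u - v) / n" using e by (simp add: diff_divide_distrib[symmetric])
  with b1 b2 have c: "(u - v) / n \<le> 1" "-1 \<le> (u - v) / n" by linarith+
  from c(1) n have d1: "u - v \<le> n" by (simp add: divide_le_eq)
  from c(2) n have d2: "- n \<le> u - v" by (simp add: le_divide_eq)
  from a3 have "\<bar>v\<bar> \<le> n" by (simp only: not_less)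
  from abs_le_D1[OF this] abs_le_D2[OF this] have "v \<le> n" "-n \<le> v" by linarith+
  with d1 d2 big show False by (simp add: abs_if split: if_splits)
qed

theorem lemma5p1:
  fixes M :: "'a measure" and f D :: "nat \<Rightarrow> 'a \<Rightarrow> real" and k :: "nat \<Rightarrow> nat"
  assumes "prob_space M"
    and "\<And>i. f i \<in> borel_measurable M"
    and "strict_mono k"
    and "\<And>N. D N \<in> borel_measurable (sigma (space M) (tail_sigma M f))"
    and "\<And>r. strict_mono r \<Longrightarrow>
           tendsto_zero_in_prob M (\<lambda>N \<omega>. (\<Sum>n<N. f (k (r n)) \<omega>) / real N - D N \<omega>)"
  shows "\<exists>r::nat \<Rightarrow> nat. strict_mono r \<and>
           ((\<lambda>C::real. SUP n. measure M {\<omega> \<in> space M. C < \<bar>f (k (r n)) \<omega>\<bar>}) \<longlongrightarrow> 0) at_top"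
proof -
  interpret prob_space M by fact
  define g where "g n = f (k n)" for n
  have gm[measurable]: "g n \<in> borel_measurable M" for n unfolding g_def using assms(2) .
  have Tsub: "tail_sigma M f \<subseteq> sets M"
  proof -
    have "tail_sigma M f \<subseteq> sigma_sets (space M)
      (\<Union>i\<in>{0..}. {f i -` B \<inter> space M | B. B \<in> sets borel})" unfolding tail_sigma_def by blast
    also have "... \<subseteq> sets M"
      by (rule sets.sigma_sets_subset) (use assms(2) in \<open>auto simp: measurable_sets\<close>)
    finally show ?thesis .
  qed
  have TPow: "tail_sigma M f \<subseteq> Pow (space M)" using Tsub sets.sets_into_space by blast
  have Dm[measurable]: "D N \<in> borel_measurable M" for N
  proof -
    have "sets (sigma (space M) (tail_sigma M f)) = sigma_sets (space M) (tail_sigma M f)"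
      using TPow by (simp add: sets_measure_of)
    also have "... \<subseteq> sets M" by (rule sets.sigma_sets_subset[OF Tsub])
    finally have "sets (sigma (space M) (tail_sigma M f)) \<subseteq> sets M" .
    moreover have "space (sigma (space M) (tail_sigma M f)) = space M" by (simp add: space_measure_of_conv)
    ultimately show ?thesis using assms(4)[of N]
      using measurable_mono[of borel borel "sigma (space M) (tail_sigma M f)" M] by auto
  qed
  have conv: "(\<lambda>N. measure M {\<omega> \<in> space M. 1/2 < \<bar>(\<Sum>n<N. g (r n) \<omega>) / real N - D N \<omega>\<bar>}) \<longlonglongrightarrow> 0"
    if "strict_mono r" for r
  proof -
    have "\<forall>e>0. (\<lambda>N. measure M {\<omega> \<in> space M. e < \<bar>(\<Sum>n<N. g (r n) \<omega>) / real N - D N \<omega>\<bar>}) \<longlonglongrightarrow> 0"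
      using assms(5)[OF that] unfolding tendsto_zero_in_prob_def g_def by simp
    from spec[OF this, of "1/2"] show ?thesis by simp
  qed
  have key: "(\<lambda>N. measure M {\<omega> \<in> space M. real (2*N) < \<bar>g (s N) \<omega>\<bar>}) \<longlonglongrightarrow> 0"
    if s: "strict_mono s" for s
  proof -
    have s2: "strict_mono (\<lambda>n. s (Suc n))" using s by (simp add: strict_mono_Suc_iff strict_mono_def)
    let ?A1 = "\<lambda>N. {\<omega> \<in> space M. 1/2 < \<bar>(\<Sum>n<N. g (s n) \<omega>) / real N - D N \<omega>\<bar>}"
    let ?A2 = "\<lambda>N. {\<omega> \<in> space M. 1/2 < \<bar>(\<Sum>n<N. g (s (Suc n)) \<omega>) / real N - D N \<omega>\<bar>}"
    let ?A3 = "\<lambda>N. {\<omega> \<in> space M. real N < \<bar>g (s 0) \<omega>\<bar>}"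
    have t3: "(\<lambda>N. measure M (?A3 N)) \<longlonglongrightarrow> 0"
      using filterlim_compose[OF tail_single[OF assms(1) gm[of "s 0"]] filterlim_real_sequentially]
      by (simp add: o_def)
    have tsum: "(\<lambda>N. measure M (?A2 N) + measure M (?A1 N) + measure M (?A3 N)) \<longlonglongrightarrow> 0 + 0 + 0"
      by (intro tendsto_add conv s s2 t3)
    have bound: "measure M {\<omega> \<in> space M. real (2*N) < \<bar>g (s N) \<omega>\<bar>}
        \<le> measure M (?A2 N) + measure M (?A1 N) + measure M (?A3 N)" if N: "N > 0" for N
    proof -
      have sub: "{\<omega> \<in> space M. real (2*N) < \<bar>g (s N) \<omega>\<bar>} \<subseteq> ?A2 N \<union> ?A1 N \<union> ?A3 N"
      proof
        fix \<omega> assume w: "\<omega> \<in> {\<omega> \<in> space M. real (2*N) < \<bar>g (s N) \<omega>\<bar>}"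
        show "\<omega> \<in> ?A2 N \<union> ?A1 N \<union> ?A3 N"
        proof (rule ccontr)
          assume "\<omega> \<notin> ?A2 N \<union> ?A1 N \<union> ?A3 N"
          with w have a2: "\<not> 1/2 < \<bar>(\<Sum>n<N. g (s (Suc n)) \<omega>) / real N - D N \<omega>\<bar>"
            and a1: "\<not> 1/2 < \<bar>(\<Sum>n<N. g (s n) \<omega>) / real N - D N \<omega>\<bar>"
            and a3: "\<not> real N < \<bar>g (s 0) \<omega>\<bar>" and big: "2 * real N < \<bar>g (s N) \<omega>\<bar>"
            by simp_all
          have "(\<Sum>n<N. g (s (Suc n)) \<omega>) - (\<Sum>n<N. g (s n) \<omega>) = g (s N) \<omega> - g (s 0) \<omega>"
            using sum_lessThan_telescope[of "\<lambda>n. g (s n) \<omega>" N] by (simp only: sum_subtractf)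
          from arith_aux[OF _ this a2 a1 a3 big] N show False by simp
        qed
      qed
      have "measure M {\<omega> \<in> space M. real (2*N) < \<bar>g (s N) \<omega>\<bar>} \<le> measure M (?A2 N \<union> ?A1 N \<union> ?A3 N)"
        by (rule finite_measure_mono[OF sub]) measurable
      also have "... \<le> measure M (?A2 N \<union> ?A1 N) + measure M (?A3 N)"
        by (rule measure_Un_le) measurable
      also have "... \<le> measure M (?A2 N) + measure M (?A1 N) + measure M (?A3 N)"
        using measure_Un_le[of "?A2 N" M "?A1 N"] by (simp add: measurable)
      finally show ?thesis .
    qed
    show ?thesis
      by (rule tendsto_sandwich[OF _ _ tendsto_const, of _ _ _ "\<lambda>N. measure M (?A2 N) + measure M (?A1 N) + measure M (?A3 N)"])
         (use bound tsum in \<open>auto intro: eventually_mono[OF eventually_gt_at_top[of 0]]\<close>)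
  qed
  let ?P = "\<lambda>C n. measure M {\<omega> \<in> space M. C < \<bar>g n \<omega>\<bar>}"
  have Pmono: "?P C' n \<le> ?P C n" if "C \<le> C'" for C C' n
    by (rule finite_measure_mono) (use that in auto)
  have bdd: "bdd_above (range (?P C))" for C
    by (rule bdd_aboveI[of _ 1]) auto
  have "((\<lambda>C. SUP n. ?P C n) \<longlongrightarrow> 0) at_top"
  proof (rule order_tendstoI)
    fix a :: real assume "a < 0"
    have "a < (SUP n. ?P C n)" for C
      using cSUP_upper2[OF bdd[of C], of 0 0] \<open>a < 0\<close> by force
    thus "eventually (\<lambda>C. a < (SUP n. ?P C n)) at_top" by simp
  next
    fix a :: real assume a: "0 < a"
    show "eventually (\<lambda>C. (SUP n. ?P C n) < a) at_top"
    proof (rule ccontr)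
      assume "\<not> ?thesis"
      hence nf: "\<forall>C. \<exists>C'\<ge>C. a \<le> (SUP n. ?P C' n)"
        by (auto simp: eventually_at_top_linorder not_less)
      define e where "e = a/2"
      have e: "0 < e" "e < a" using a by (auto simp: e_def)
      have c1: "\<exists>n. e < ?P C n" for C
      proof -
        obtain C' where C': "C' \<ge> C" "a \<le> (SUP n. ?P C' n)" using nf by blast
        hence "e < (SUP n. ?P C' n)" using e by linarith
        then obtain n where "e < ?P C' n" using less_cSUP_iff[OF _ bdd[of C']] by auto
        thus ?thesis using Pmono[OF C'(1)] by (meson less_le_trans)
      qed
      have c2: "\<exists>n>m. e < ?P (real (2*j)) n" for j m
      proof -
        have "eventually (\<lambda>C. \<forall>i\<in>{..m}. ?P C i < e) at_top"
          by (rule eventually_ball_finite) (use order_tendstoD(2)[OF tail_single[OF assms(1) gm] e(1)] in auto)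
        moreover have "eventually (\<lambda>C. real (2*j) \<le> C) at_top" by (rule eventually_ge_at_top)
        ultimately have "eventually (\<lambda>C. (\<forall>i\<in>{..m}. ?P C i < e) \<and> real (2*j) \<le> C) at_top"
          by (rule eventually_conj)
        then obtain C where C: "\<forall>i\<in>{..m}. ?P C i < e" "real (2*j) \<le> C"
          by (auto simp: eventually_at_top_linorder)
        obtain n where n: "e < ?P C n" using c1 by blast
        have "n > m" using C(1) n by (metis atMost_iff not_less not_less_iff_gr_or_eq)
        moreover have "e < ?P (real (2*j)) n" using n Pmono[OF C(2), of n] by linarith
        ultimately show ?thesis by blast
      qed
      obtain s where s: "strict_mono s" "\<forall>j. e < ?P (real (2*j)) (s j)"
        using choose_seq[of "\<lambda>j n. e < ?P (real (2*j)) n"] c2 by blast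
      have "eventually (\<lambda>N. ?P (real (2*N)) (s N) < e) sequentially"
        using order_tendstoD(2)[OF key[OF s(1)] e(1)] by simp
      then obtain N where "?P (real (2*N)) (s N) < e" by (auto simp: eventually_sequentially)
      thus False using s(2) by (meson not_less_iff_gr_or_eq)
    qed
  qed
  thus ?thesis by (intro exI[of _ id]) (simp add: g_def strict_mono_def)
qed

end
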